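(* Let $(M,\rho)$ be a complete metric space, let $f,g:M\to\mathbb{R}\cup\{+\infty\}$ be lower semicontinuous, and let $f$ also be proper and bounded below. Then $$\inf_{x\in\operatorname{dom} f}(f(x)-g(x))=\inf_{x\in\operatorname{dom}|\widetilde\nabla f|}(f(x)-g(x)).$$
   Context: $\operatorname{dom} f:=\{x:f(x)<+\infty\}$; on $\operatorname{dom} f$, $f(x)-g(x)\in\mathbb{R}\cup\{-\infty\}$ (equal to $-\infty$ if $g(x)=+\infty$). $[t]^+:=\max\{0,t\}$ (with $[f(x)-f(y)]^+:=0$ if $f(y)=+\infty$). For $x\in\operatorname{dom} f$, the global slope is $|\widetilde\nabla f|(x):=\sup_{y\neq x}\frac{[f(x)-f(y)]^+}{\rho(x,y)}\in[0,+\infty]$, and $\operatorname{dom}|\widetilde\nabla f|:=\{x\in\operatorname{dom} f:\ |\widetilde\nabla f|(x)<+\infty\}$. *)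

theory Defs
  imports "HOL-Analysis.Analysis"
begin

text \<open>Extended-real valued functions \<open>M \<Rightarrow> \<real> \<union> {+\<infinity>}\<close> are modelled as
  \<open>'a \<Rightarrow> ereal\<close> together with the hypothesis that \<open>-\<infinity>\<close> is never attained.\<close>

definition lsc :: "('a::topological_space \<Rightarrow> ereal) \<Rightarrow> bool" where
  "lsc f \<longleftrightarrow> (\<forall>c. closed {x. f x \<le> c})"

definition edom :: "('a \<Rightarrow> ereal) \<Rightarrow> 'a set" where
  "edom f = {x. f x < \<infinity>}"

definition pos_diff :: "ereal \<Rightarrow> ereal \<Rightarrow> ereal" where
  "pos_diff a b = (if b = \<infinity> then 0 else max 0 (a - b))"

text \<open>Global slope; it takes values in \<open>[0,+\<infinity>]\<close> (a supremum of nonnegative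
  quantities, hence 0 if \<open>M\<close> is a single point).\<close>
definition global_slope :: "('a::metric_space \<Rightarrow> ereal) \<Rightarrow> 'a \<Rightarrow> ereal" where
  "global_slope f x = sup 0 (SUP y\<in>UNIV - {x}. pos_diff (f x) (f y) / ereal (dist x y))"

definition slope_dom :: "('a::metric_space \<Rightarrow> ereal) \<Rightarrow> 'a set" where
  "slope_dom f = {x \<in> edom f. global_slope f x < \<infinity>}"

end

theory Submission
  imports Defs
begin

lemma lsc_open: "lsc f \<Longrightarrow> open {x. c < f x}"
proof -
  assume "lsc f"
  then have "closed {x. f x \<le> c}" unfolding lsc_def by blast
  moreover have "{x. c < f x} = - {x. f x \<le> c}" by auto
  ultimately show ?thesis by (simp add: open_Compl)
qed

lemma lsc_ball:
  fixes f :: "'a::metric_space \<Rightarrow> ereal"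
  assumes "lsc f" "c < f z"
  shows "\<exists>r>0. \<forall>w\<in>ball z r. c < f w"
proof -
  have "open {x. c < f x}" using lsc_open[OF assms(1)] .
  then obtain r where "r > 0" "ball z r \<subseteq> {x. c < f x}"
    using assms(2) open_contains_ball by blast
  then show ?thesis by auto
qed

lemma S_closed:
  fixes f :: "'a::metric_space \<Rightarrow> ereal"
  assumes ninf: "\<And>x. f x \<noteq> -\<infinity>" and l: "lsc f" and K: "K > 0"
  shows "closed {z. f z + ereal (K * dist x z) \<le> ereal a}"
proof -
  have "open (- {z. f z + ereal (K * dist x z) \<le> ereal a})"
  proof (rule openI)
    fix z assume "z \<in> - {z. f z + ereal (K * dist x z) \<le> ereal a}"
    then have hz: "ereal a < f z + ereal (K * dist x z)" by auto
    define t where "t = a - K * dist x z"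
    have "ereal t < f z" using hz ninf[of z] unfolding t_def
      by (cases "f z") auto
    then obtain t' where t': "ereal t < ereal t'" "ereal t' < f z" using ereal_dense2 by blast
    obtain r where r: "r > 0" "\<forall>w\<in>ball z r. ereal t' < f w" using lsc_ball[OF l t'(2)] by blast
    define e where "e = min r ((t' - t) / K)"
    have e: "e > 0" using r t' K unfolding e_def by auto
    show "\<exists>e>0. ball z e \<subseteq> - {z. f z + ereal (K * dist x z) \<le> ereal a}"
    proof (intro exI[of _ e] conjI e subsetI)
      fix w assume w: "w \<in> ball z e"
      then have "w \<in> ball z r" unfolding e_def by auto
      then have fw: "ereal t' < f w" using r by auto
      have "dist z w < (t' - t) / K" using w unfolding e_def by auto
      then have "K * dist z w < t' - t" using K by (simp add: field_simps)
      moreover have "dist x z \<le> dist x w + dist z w" by (metis dist_commute dist_triangle)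
      then have "K * dist x z \<le> K * dist x w + K * dist z w" using K
        by (metis distrib_left mult_left_mono less_imp_le)
      ultimately have "a < t' + K * dist x w" unfolding t_def by linarith
      then show "w \<in> - {z. f z + ereal (K * dist x z) \<le> ereal a}"
        using fw ninf[of w] by (cases "f w") auto
    qed
  qed
  then show ?thesis by (simp add: closed_def)
qed

lemma ekeland:
  fixes f :: "'a::complete_space \<Rightarrow> ereal"
  assumes ninf: "\<And>x. f x \<noteq> -\<infinity>" and l: "lsc f" and lb: "\<And>x. ereal c0 \<le> f x"
    and fx0: "f x0 \<noteq> \<infinity>" and K: "K > 0"
  shows "\<exists>y. f y \<noteq> \<infinity> \<and> f y + ereal (K * dist x0 y) \<le> f x0 \<and>
             (\<forall>z. f y \<le> f z + ereal (K * dist y z))"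
proof -
  define S where "S p = {z. f z + ereal (K * dist p z) \<le> f p}" for p
  define fr where "fr z = real_of_ereal (f z)" for z
  have fin: "f z \<noteq> \<infinity> \<Longrightarrow> f z = ereal (fr z)" for z
    using ninf[of z] unfolding fr_def by (cases "f z") auto
  have frlb: "f z \<noteq> \<infinity> \<Longrightarrow> c0 \<le> fr z" for z using fin[of z] lb[of z] by auto
  have Smem: "f p \<noteq> \<infinity> \<Longrightarrow> z \<in> S p \<longleftrightarrow> f z \<noteq> \<infinity> \<and> fr z + K * dist p z \<le> fr p" for p z
    using fin[of p] fin[of z] unfolding S_def by (cases "f z = \<infinity>") auto
  have Strans: "f p \<noteq> \<infinity> \<Longrightarrow> q \<in> S p \<Longrightarrow> z \<in> S q \<Longrightarrow> z \<in> S p" for p q z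
  proof -
    assume a: "f p \<noteq> \<infinity>" "q \<in> S p" "z \<in> S q"
    then have q: "f q \<noteq> \<infinity>" "fr q + K * dist p q \<le> fr p" using Smem by auto
    then have z: "f z \<noteq> \<infinity>" "fr z + K * dist q z \<le> fr q" using Smem a by auto
    have "dist p z \<le> dist p q + dist q z" by (rule dist_triangle)
    then have "K * dist p z \<le> K * dist p q + K * dist q z" using K
      by (metis distrib_left mult_left_mono less_imp_le)
    then show ?thesis using Smem[OF a(1)] q z by auto
  qed
  have Sself: "f p \<noteq> \<infinity> \<Longrightarrow> p \<in> S p" for p using Smem by auto
  have Sclosed: "f p \<noteq> \<infinity> \<Longrightarrow> closed (S p)" for p
    unfolding S_def using fin[of p] S_closed[OF ninf l K, of p "fr p"] by simp
  have Sbdd: "f p \<noteq> \<infinity> \<Longrightarrow> bdd_below (fr ` S p)" for p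
    using Smem frlb by (auto intro!: bdd_belowI[of _ c0])
  define eps where "eps n = (1/2::real)^n" for n
  have epspos: "eps n > 0" for n unfolding eps_def by simp
  have step: "f p \<noteq> \<infinity> \<Longrightarrow> \<exists>z. z \<in> S p \<and> fr z \<le> (INF w\<in>S p. fr w) + eps n" for p n
  proof -
    assume a: "f p \<noteq> \<infinity>"
    have ne: "S p \<noteq> {}" using Sself[OF a] by auto
    have "(INF w\<in>S p. fr w) < (INF w\<in>S p. fr w) + eps n" using epspos by simp
    then have "\<exists>z\<in>S p. fr z < (INF w\<in>S p. fr w) + eps n"
      using cINF_less_iff[OF ne Sbdd[OF a]] by blast
    then obtain z where "z \<in> S p" "fr z < (INF w\<in>S p. fr w) + eps n" by blast
    then show ?thesis by (intro exI[of _ z]) auto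
  qed
  define xs where "xs = rec_nat x0 (\<lambda>n p. SOME z. z \<in> S p \<and> fr z \<le> (INF w\<in>S p. fr w) + eps n)"
  have xs0: "xs 0 = x0" unfolding xs_def by simp
  have xsS: "xs (Suc n) = (SOME z. z \<in> S (xs n) \<and> fr z \<le> (INF w\<in>S (xs n). fr w) + eps n)" for n
    unfolding xs_def by simp
  have inv: "f (xs n) \<noteq> \<infinity> \<and> xs (Suc n) \<in> S (xs n) \<and> fr (xs (Suc n)) \<le> (INF w\<in>S (xs n). fr w) + eps n" for n
  proof (induction n)
    case 0
    show ?case using someI_ex[OF step[OF fx0, of 0]] fx0 by (simp add: xs0 xsS[of 0])
  next
    case (Suc n)
    then have "f (xs (Suc n)) \<noteq> \<infinity>" using Smem[of "xs n" "xs (Suc n)"] by simp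
    then show ?case using someI_ex[OF step[of "xs (Suc n)" "Suc n"]] xsS[of "Suc n"] by simp
  qed
  have mono: "m \<le> n \<Longrightarrow> S (xs n) \<subseteq> S (xs m)" for m n
  proof (induction n rule: dec_induct)
    case base then show ?case by simp
  next
    case (step n)
    have "S (xs (Suc n)) \<subseteq> S (xs n)" using Strans[of "xs n" "xs (Suc n)"] inv[of n] by blast
    then show ?case using step by blast
  qed
  have diam: "z \<in> S (xs (Suc n)) \<Longrightarrow> K * dist (xs (Suc n)) z \<le> eps n" for z n
  proof -
    assume z: "z \<in> S (xs (Suc n))"
    have f1: "f (xs (Suc n)) \<noteq> \<infinity>" using inv[of "Suc n"] by simp
    have "z \<in> S (xs n)" using z mono[of n "Suc n"] by auto
    then have "(INF w\<in>S (xs n). fr w) \<le> fr z" using cINF_lower[OF Sbdd[of "xs n"], of z] inv[of n] by simp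
    moreover have "fr z + K * dist (xs (Suc n)) z \<le> fr (xs (Suc n))" using Smem[OF f1] z by auto
    ultimately show ?thesis using inv[of n] by linarith
  qed
  obtain y where y: "\<And>n. y \<in> S (xs n)"
  proof (rule decreasing_closed_nest[of "\<lambda>n. S (xs n)"])
    show "closed (S (xs n))" for n using Sclosed[of "xs n"] inv[of n] by simp
    show "S (xs n) \<noteq> {}" for n using Sself[of "xs n"] inv[of n] by auto
    show "m \<le> n \<Longrightarrow> S (xs n) \<subseteq> S (xs m)" for m n using mono by blast
    fix e :: real assume e: "e > 0"
    obtain n where n: "(1/2::real)^n < e * K / 2" using real_arch_pow_inv[of "e * K / 2" "1/2"] e K by auto
    show "\<exists>n. \<forall>x\<in>S (xs n). \<forall>y\<in>S (xs n). dist x y < e"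
    proof (intro exI[of _ "Suc n"] ballI)
      fix a b assume ab: "a \<in> S (xs (Suc n))" "b \<in> S (xs (Suc n))"
      have "K * dist (xs (Suc n)) a \<le> eps n" "K * dist (xs (Suc n)) b \<le> eps n" using diam ab by auto
      moreover have "dist a b \<le> dist (xs (Suc n)) a + dist (xs (Suc n)) b" by (metis dist_commute dist_triangle)
      ultimately have "K * dist a b \<le> 2 * eps n" using K
        by (smt (verit, ccfv_SIG) distrib_left mult_left_mono)
      also have "\<dots> < e * K" using n unfolding eps_def by simp
      finally show "dist a b < e" using K by simp
    qed
  qed blast
  have yx0: "y \<in> S x0" using y[of 0] xs0 by simp
  then have fy: "f y \<noteq> \<infinity>" using Smem[OF fx0, of y] by simp
  have "f y \<le> f z + ereal (K * dist y z)" for z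
  proof (cases "z \<in> S y")
    case False then show ?thesis unfolding S_def by auto
  next
    case True
    have "fr y \<le> fr z + eps n" for n
    proof -
      have f1: "f (xs (Suc n)) \<noteq> \<infinity>" using inv[of "Suc n"] by simp
      have "z \<in> S (xs (Suc n))" using Strans[OF f1 y True] .
      then have zn: "z \<in> S (xs n)" using mono[of n "Suc n"] by auto
      then have "(INF w\<in>S (xs n). fr w) \<le> fr z" using cINF_lower[OF Sbdd[of "xs n"], of z] inv[of n] by simp
      moreover have "fr y \<le> fr (xs (Suc n))"
      proof -
        have "0 \<le> K * dist (xs (Suc n)) y" using K by simp
        then show ?thesis using Smem[OF f1] y[of "Suc n"] by auto
      qed
      ultimately show ?thesis using inv[of n] by linarith
    qed
    then have "fr y \<le> fr z"
    proof (rule_tac ccontr)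
      assume a: "\<And>n. fr y \<le> fr z + eps n" "\<not> fr y \<le> fr z"
      obtain n where "(1/2::real)^n < fr y - fr z" using real_arch_pow_inv[of "fr y - fr z" "1/2"] a(2) by auto
      then show False using a(1)[of n] unfolding eps_def by simp
    qed
    moreover have "f z \<noteq> \<infinity>" using True Smem[OF fy, of z] by simp
    moreover have "0 \<le> K * dist y z" using K by simp
    ultimately show ?thesis using fin[of y] fin[of z] fy by simp
  qed
  then show ?thesis using yx0 fy unfolding S_def by auto
qed

lemma slope_bound:
  fixes f :: "'a::metric_space \<Rightarrow> ereal"
  assumes ninf: "\<And>x. f x \<noteq> -\<infinity>" and fy: "f y \<noteq> \<infinity>" and K: "K > 0"
    and h: "\<And>z. f y \<le> f z + ereal (K * dist y z)"
  shows "global_slope f y \<le> ereal K"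
proof -
  have "pos_diff (f y) (f z) / ereal (dist y z) \<le> ereal K" if z: "z \<noteq> y" for z
  proof (rule ereal_divide_le_posI)
    show "0 < ereal (dist y z)" using z by simp
    show "pos_diff (f y) (f z) \<noteq> - \<infinity>" unfolding pos_diff_def by auto
    have dpos: "0 \<le> K * dist y z" using K by simp
    show "pos_diff (f y) (f z) \<le> ereal (dist y z) * ereal K"
    proof (cases "f z = \<infinity>")
      case True then show ?thesis unfolding pos_diff_def using dpos by (simp add: mult.commute)
    next
      case False
      then obtain a b where ab: "f y = ereal a" "f z = ereal b" using fy ninf[of y] ninf[of z]
        by (cases "f y"; cases "f z") auto
      have "a \<le> b + K * dist y z" using h[of z] ab by simp
      then show ?thesis unfolding pos_diff_def using ab dpos False by (simp add: mult.commute)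
    qed
  qed
  then have "(SUP z\<in>UNIV - {y}. pos_diff (f y) (f z) / ereal (dist y z)) \<le> ereal K"
    by (intro SUP_least) auto
  then show ?thesis unfolding global_slope_def using K by simp
qed

theorem lemma2p8:
  fixes f g :: "'a::complete_space \<Rightarrow> ereal"
  assumes f_ninf: "\<And>x. f x \<noteq> -\<infinity>"
    and g_ninf: "\<And>x. g x \<noteq> -\<infinity>"
    and f_lsc: "lsc f"
    and g_lsc: "lsc g"
    and f_proper: "edom f \<noteq> {}"
    and f_bdd: "\<exists>c::real. \<forall>x. ereal c \<le> f x"
  shows "(INF x\<in>edom f. f x - g x) = (INF x\<in>slope_dom f. f x - g x)"
proof (rule antisym)
  have "slope_dom f \<subseteq> edom f" unfolding slope_dom_def by auto
  then show "(INF x\<in>edom f. f x - g x) \<le> (INF x\<in>slope_dom f. f x - g x)"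
    by (rule INF_superset_mono) simp
next
  obtain c0 :: real where c0: "\<And>x. ereal c0 \<le> f x" using f_bdd by blast
  show "(INF x\<in>slope_dom f. f x - g x) \<le> (INF x\<in>edom f. f x - g x)"
  proof (rule INF_greatest)
    fix x assume x: "x \<in> edom f"
    then obtain a0 where a0: "f x = ereal a0" using f_ninf[of x] unfolding edom_def
      by (cases "f x") auto
    show "(INF x\<in>slope_dom f. f x - g x) \<le> f x - g x"
    proof (rule dense_ge)
      fix b assume b: "f x - g x < b"
      show "(INF x\<in>slope_dom f. f x - g x) \<le> b"
      proof (cases "b = \<infinity>")
        case True then show ?thesis by simp
      next
        case False
        then obtain bb where bb: "b = ereal bb" using b by (cases b) auto
        have "ereal (a0 - bb) < g x" using b a0 bb g_ninf[of x] by (cases "g x") auto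
        then obtain c where c: "ereal (a0 - bb) < ereal c" "ereal c < g x"
          using ereal_dense2 by blast
        obtain r where r: "r > 0" "\<forall>w\<in>ball x r. ereal c < g w" using lsc_ball[OF g_lsc c(2)] by blast
        define K where "K = (\<bar>a0 - c0\<bar> + 1) / r"
        have K: "K > 0" unfolding K_def using r by simp
        obtain y where y: "f y \<noteq> \<infinity>" "f y + ereal (K * dist x y) \<le> f x"
          "\<And>z. f y \<le> f z + ereal (K * dist y z)"
          using ekeland[OF f_ninf f_lsc c0, of x K] a0 K by auto
        obtain fy where fy: "f y = ereal fy" using y(1) f_ninf[of y] by (cases "f y") auto
        have "c0 \<le> fy" using c0[of y] fy by simp
        moreover have "fy + K * dist x y \<le> a0" using y(2) fy a0 by simp
        moreover have "K * r = \<bar>a0 - c0\<bar> + 1" unfolding K_def using r by simp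
        ultimately have "K * dist x y < K * r" by linarith
        then have "dist x y < r" using K by simp
        then have gy: "ereal c < g y" using r by simp
        have fyle: "fy \<le> a0" using \<open>fy + K * dist x y \<le> a0\<close> K by (smt (verit) zero_le_dist mult_nonneg_nonneg)
        have lt: "f y - g y < b"
          using gy fy bb c(1) fyle g_ninf[of y] by (cases "g y") auto
        have "global_slope f y \<le> ereal K" using slope_bound[OF f_ninf y(1) K y(3)] .
        then have "y \<in> slope_dom f" unfolding slope_dom_def edom_def using y(1) by auto
        then have "(INF x\<in>slope_dom f. f x - g x) \<le> f y - g y" by (rule INF_lower)
        then show ?thesis using lt by simp
      qed
    qed
  qed
qed

end
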